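(* Let $m,N\ge1$ and $\xi=(\xi_1,\dots,\xi_m)\in\mathbb{C}^m$ with $1,\xi_1,\dots,\xi_m$ linearly independent over $\overline{\mathbb{Q}}$. Let $A\in\mathrm{GL}_m(\overline{\mathbb{Q}})$ and $\xi'=A\xi$ (viewing tuples as column vectors). Let $\varrho\ge0$. If property $\mathcal P(m,N,\xi,R)$ holds for every subspace $R\subset\mathbb{C}^\Omega$ defined over $\overline{\mathbb{Q}}$ with $\dim R=\varrho$, then $\mathcal P(m,N,\xi',R')$ holds for every subspace $R'\subset\mathbb{C}^\Omega$ defined over $\overline{\mathbb{Q}}$ with $\dim R'=\varrho$.
   Context: Let $\Omega=\{\kappa\in\mathbb{N}^m:\ N-1\le|\kappa|\le N\}$, $\Theta=\{\kappa\in\mathbb{N}^m:\ |\kappa|=N\}$ (with $|\kappa|=\kappa_1+\dots+\kappa_m$), $(E_\kappa)_{\kappa\in\Omega}$ the canonical basis of $\mathbb{C}^\Omega$, $(e_j)$ that of $\mathbb{Z}^m$. For $\zeta=(\zeta_1,\dots,\zeta_m)\in\mathbb{C}^m$ and $\kappa\in\Theta$ put $Z_\kappa^{\zeta}=E_\kappa+\sum_{j=1}^m\zeta_jE_{\kappa-e_j}$ (with $E_{\kappa-e_j}=0$ if $\kappa_j=0$) and $F_\zeta=\mathrm{Span}\{Z^\zeta_\kappa:\kappa\in\Theta\}$. For a subspace $R\subset\mathbb{C}^\Omega$, $\mathcal P(m,N,\zeta,R)$ denotes the statement: $\dim R\ge\big(2-\frac{m-1}{N+m-1}\big)\dim(F_\zeta\cap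 R)$, with equality if and only if $R=\{0\}$ or $R=\mathbb{C}^\Omega$. A subspace is defined over $\overline{\mathbb{Q}}$ if it has a basis of vectors in $\overline{\mathbb{Q}}^\Omega$. *)

theory Defs
  imports "HOL-Computational_Algebra.Polynomial" "HOL-Library.Function_Algebras"
begin

text \<open>Multi-indices kappa in N^m are lists of naturals of length m; kappa ! j is the
  (j+1)-th coordinate. Vectors of C^Omega are functions nat list => complex that vanish
  outside Omega.\<close>

definition Omega :: "nat \<Rightarrow> nat \<Rightarrow> nat list set" where
  "Omega m N = {k. length k = m \<and> N - 1 \<le> sum_list k \<and> sum_list k \<le> N}"

definition Theta :: "nat \<Rightarrow> nat \<Rightarrow> nat list set" where
  "Theta m N = {k. length k = m \<and> sum_list k = N}"

definition cscale :: "complex \<Rightarrow> (nat list \<Rightarrow> complex) \<Rightarrow> (nat list \<Rightarrow> complex)" where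
  "cscale c f = (\<lambda>x. c * f x)"

definition CO :: "nat \<Rightarrow> nat \<Rightarrow> (nat list \<Rightarrow> complex) set" where
  "CO m N = {f. \<forall>x. x \<notin> Omega m N \<longrightarrow> f x = 0}"

definition Evec :: "nat list \<Rightarrow> (nat list \<Rightarrow> complex)" where
  "Evec k = (\<lambda>x. if x = k then 1 else 0)"

definition Zvec :: "nat \<Rightarrow> (nat \<Rightarrow> complex) \<Rightarrow> nat list \<Rightarrow> (nat list \<Rightarrow> complex)" where
  "Zvec m \<zeta> k = (\<lambda>x. Evec k x +
      (\<Sum>j<m. if 0 < k ! j then \<zeta> j * Evec (k[j := k ! j - 1]) x else 0))"

definition Fsp :: "nat \<Rightarrow> nat \<Rightarrow> (nat \<Rightarrow> complex) \<Rightarrow> (nat list \<Rightarrow> complex) set" where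
  "Fsp m N \<zeta> = module.span cscale (Zvec m \<zeta> ` Theta m N)"

definition cdim :: "(nat list \<Rightarrow> complex) set \<Rightarrow> nat" where
  "cdim R = vector_space.dim cscale R"

definition is_subspace :: "nat \<Rightarrow> nat \<Rightarrow> (nat list \<Rightarrow> complex) set \<Rightarrow> bool" where
  "is_subspace m N R \<longleftrightarrow> R \<subseteq> CO m N \<and> module.subspace cscale R"

definition defined_over_Qbar :: "(nat list \<Rightarrow> complex) set \<Rightarrow> bool" where
  "defined_over_Qbar R \<longleftrightarrow> (\<exists>B. B \<subseteq> R \<and> \<not> module.dependent cscale B \<and>
      module.span cscale B = R \<and> (\<forall>b\<in>B. \<forall>x. algebraic (b x)))"

definition propP :: "nat \<Rightarrow> nat \<Rightarrow> (nat \<Rightarrow> complex) \<Rightarrow> (nat list \<Rightarrow> complex) set \<Rightarrow> bool" where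
  "propP m N \<zeta> R \<longleftrightarrow>
     real (cdim R) \<ge> (2 - (real m - 1) / (real N + real m - 1)) * real (cdim (Fsp m N \<zeta> \<inter> R)) \<and>
     (real (cdim R) = (2 - (real m - 1) / (real N + real m - 1)) * real (cdim (Fsp m N \<zeta> \<inter> R))
        \<longleftrightarrow> (R = {0} \<or> R = CO m N))"

end

theory Submission
  imports Defs
begin


definition qs :: "rat \<Rightarrow> complex \<Rightarrow> complex" where "qs q z = of_rat q * z"

interpretation Q: vector_space qs
  by unfold_locales (auto simp: qs_def algebra_simps of_rat_add of_rat_mult)

lemma mult_span:
  assumes "w \<in> Q.span X" "\<forall>v\<in>X. v * c \<in> Q.span Y"
  shows "w * c \<in> Q.span Y"
proof (rule Q.span_induct[OF assms(1)])
  have sc: "of_rat q * (w * c) \<in> Q.span Y" if "w * c \<in> Q.span Y" for q w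
    using Q.span_scale[OF that, of q] by (simp add: qs_def)
  show "Q.subspace {w. w * c \<in> Q.span Y}" unfolding Q.subspace_def
    by (auto simp: distrib_right qs_def mult.assoc intro: Q.span_add Q.span_zero sc)
next
  fix x assume "x \<in> X"
  then show "x * c \<in> Q.span Y" using assms(2) by auto
qed

lemma alg_crit:
  fixes z :: complex
  assumes fin: "finite S" and one: "1 \<in> Q.span S" and cl: "\<forall>s\<in>S. s * z \<in> Q.span S"
  shows "algebraic z"
proof -
  have pow: "z ^ n \<in> Q.span S" for n
  proof (induct n)
    case 0 then show ?case using one by simp
  next
    case (Suc n)
    have "z ^ n * z \<in> Q.span S" by (rule mult_span[OF Suc cl])
    then show ?case by (simp add: mult.commute)
  qed
  define n where "n = card S"
  show ?thesis
  proof (cases "inj_on (\<lambda>i. z ^ i) {..n}")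
    case False
    then obtain i j where ij: "i \<noteq> j" "z ^ i = z ^ j" unfolding inj_on_def by auto
    define p :: "complex poly" where "p = monom 1 j - monom 1 i"
    show ?thesis
    proof (rule algebraicI')
      show "coeff p k \<in> \<rat>" for k by (auto simp: p_def coeff_monom)
      show "p \<noteq> 0" using ij(1) by (auto simp: p_def poly_eq_iff coeff_monom dest: spec[of _ j])
      show "poly p z = 0" using ij(2) by (simp add: p_def poly_monom)
    qed
  next
    case True
    define T where "T = (\<lambda>i. z ^ i) ` {..n}"
    have cT: "card T = Suc n" using True by (simp add: T_def card_image)
    have TS: "T \<subseteq> Q.span S" using pow by (auto simp: T_def)
    have "Q.dependent T"
    proof (rule ccontr)
      assume "Q.independent T"
      from Q.independent_span_bound[OF fin this TS] cT n_def show False by simp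
    qed
    then obtain u where u: "\<exists>v\<in>T. u v \<noteq> 0" "(\<Sum>v\<in>T. qs (u v) v) = 0"
      using Q.dependent_finite[of T] by (auto simp: T_def)
    define p :: "complex poly" where "p = (\<Sum>i\<le>n. monom (of_rat (u (z ^ i))) i)"
    have cp: "coeff p k = (if k \<le> n then of_rat (u (z ^ k)) else 0)" for k
      by (simp add: p_def coeff_sum coeff_monom)
    show ?thesis
    proof (rule algebraicI')
      show "coeff p k \<in> \<rat>" for k by (simp add: cp)
      show "p \<noteq> 0"
      proof
        assume "p = 0"
        then have "coeff p k = 0" for k by simp
        from u(1) obtain i where i: "i \<le> n" "u (z ^ i) \<noteq> 0" by (auto simp: T_def)
        have "coeff p i = 0" by fact
        with i show False by (simp add: cp)
      qed
      have "poly p z = (\<Sum>i\<le>n. of_rat (u (z ^ i)) * z ^ i)"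
        by (simp add: p_def poly_sum poly_monom)
      also have "\<dots> = (\<Sum>v\<in>T. qs (u v) v)"
        unfolding T_def by (subst sum.reindex[OF True]) (simp add: qs_def)
      finally show "poly p z = 0" using u(2) by simp
    qed
  qed
qed

lemma alg_pow_span:
  fixes x :: complex
  assumes "algebraic x"
  obtains a where "a \<ge> 1" "\<forall>i<a. x ^ i * x \<in> Q.span ((\<lambda>i. x ^ i) ` {..<a})"
proof -
  obtain p where p: "\<forall>i. coeff p i \<in> \<rat>" "p \<noteq> 0" "poly p x = 0"
    using assms algebraic_altdef by blast
  define a where "a = degree p"
  have a1: "a \<ge> 1"
  proof (rule ccontr)
    assume "\<not> a \<ge> 1"
    then have d0: "degree p = 0" by (simp add: a_def)
    then have "poly p x = coeff p 0" by (simp add: poly_altdef)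
    with p(3) have "lead_coeff p = 0" using d0 by simp
    with p(2) show False by simp
  qed
  have lc: "lead_coeff p \<noteq> 0" using p(2) by simp
  have "0 = (\<Sum>i\<le>a. coeff p i * x ^ i)" using p(3) by (simp add: poly_altdef a_def)
  also have "\<dots> = (\<Sum>i<a. coeff p i * x ^ i) + lead_coeff p * x ^ a"
    by (simp add: a_def lessThan_Suc_atMost[symmetric])
  finally have e0: "(\<Sum>i<a. coeff p i * x ^ i) = - (lead_coeff p * x ^ a)"
    by (simp add: eq_neg_iff_add_eq_0)
  have "(\<Sum>i<a. (- coeff p i / lead_coeff p) * x ^ i) = - (\<Sum>i<a. coeff p i * x ^ i) / lead_coeff p"
    by (simp add: sum_divide_distrib sum_negf)
  also have "\<dots> = x ^ a" using lc by (simp add: e0)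
  finally have xa: "x ^ a = (\<Sum>i<a. (- coeff p i / lead_coeff p) * x ^ i)" by simp
  have xa_sp: "x ^ a \<in> Q.span ((\<lambda>i. x ^ i) ` {..<a})"
    unfolding xa
  proof (rule Q.span_sum)
    fix i assume i: "i \<in> {..<a}"
    have "- coeff p i / lead_coeff p \<in> \<rat>" using p(1) by (simp add: a_def)
    then obtain q where q: "- coeff p i / lead_coeff p = of_rat q" unfolding Rats_def by blast
    have "qs q (x ^ i) \<in> Q.span ((\<lambda>i. x ^ i) ` {..<a})"
      using i by (intro Q.span_scale Q.span_base) auto
    then show "- coeff p i / lead_coeff p * x ^ i \<in> Q.span ((\<lambda>i. x ^ i) ` {..<a})"
      by (simp only: q qs_def)
  qed
  show ?thesis
  proof (rule that[OF a1], intro allI impI)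
    fix i assume "i < a"
    show "x ^ i * x \<in> Q.span ((\<lambda>i. x ^ i) ` {..<a})"
    proof (cases "Suc i < a")
      case True then show ?thesis by (intro Q.span_base rev_image_eqI[of "Suc i"]) (auto simp: mult.commute)
    next
      case False then have "Suc i = a" using \<open>i < a\<close> by simp
      then show ?thesis using xa_sp by (metis power_Suc mult.commute)
    qed
  qed
qed

lemma alg_add_mult:
  fixes x y :: complex
  assumes "algebraic x" "algebraic y"
  shows "algebraic (x + y) \<and> algebraic (x * y)"
proof -
  obtain a where a: "a \<ge> 1" "\<forall>i<a. x ^ i * x \<in> Q.span ((\<lambda>i. x ^ i) ` {..<a})"
    using alg_pow_span[OF assms(1)] by blast
  obtain b where b: "b \<ge> 1" "\<forall>i<b. y ^ i * y \<in> Q.span ((\<lambda>i. y ^ i) ` {..<b})"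
    using alg_pow_span[OF assms(2)] by blast
  define S where "S = (\<lambda>(i, j). x ^ i * y ^ j) ` ({..<a} \<times> {..<b})"
  have fin: "finite S" by (simp add: S_def)
  have one: "1 \<in> Q.span S"
    using a(1) b(1) by (intro Q.span_base) (auto simp: S_def intro!: rev_image_eqI[of "(0,0)"])
  have clx: "\<forall>s\<in>S. s * x \<in> Q.span S"
  proof
    fix s assume "s \<in> S"
    then obtain i j where ij: "i < a" "j < b" "s = x ^ i * y ^ j" by (auto simp: S_def)
    have "(x ^ i * x) * y ^ j \<in> Q.span S"
      by (rule mult_span[OF a(2)[rule_format, OF ij(1)]]) (use ij(2) in \<open>auto simp: S_def intro!: Q.span_base\<close>)
    then show "s * x \<in> Q.span S" by (simp add: ij(3) algebra_simps)
  qed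
  have cly: "\<forall>s\<in>S. s * y \<in> Q.span S"
  proof
    fix s assume "s \<in> S"
    then obtain i j where ij: "i < a" "j < b" "s = x ^ i * y ^ j" by (auto simp: S_def)
    have "(y ^ j * y) * x ^ i \<in> Q.span S"
      by (rule mult_span[OF b(2)[rule_format, OF ij(2)]]) (use ij(1) in \<open>auto simp: S_def mult.commute intro!: Q.span_base\<close>)
    then show "s * y \<in> Q.span S" by (simp add: ij(3) algebra_simps)
  qed
  have "algebraic (x + y)"
  proof (rule alg_crit[OF fin one])
    show "\<forall>s\<in>S. s * (x + y) \<in> Q.span S"
      using clx cly by (auto simp: distrib_left intro: Q.span_add)
  qed
  moreover have "algebraic (x * y)"
  proof (rule alg_crit[OF fin one])
    show "\<forall>s\<in>S. s * (x * y) \<in> Q.span S"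
    proof
      fix s assume "s \<in> S"
      have "(s * y) * x \<in> Q.span S" using mult_span[OF cly[rule_format, OF \<open>s \<in> S\<close>] clx] .
      then show "s * (x * y) \<in> Q.span S" by (simp add: algebra_simps)
    qed
  qed
  ultimately show ?thesis by blast
qed

lemma alg_add: "algebraic x \<Longrightarrow> algebraic y \<Longrightarrow> algebraic ((x::complex) + y)"
  using alg_add_mult by blast
lemma alg_mult: "algebraic x \<Longrightarrow> algebraic y \<Longrightarrow> algebraic ((x::complex) * y)"
  using alg_add_mult by blast
lemma alg_one: "algebraic (1::complex)"
  by (rule rat_imp_algebraic) simp

lemma alg_sum: "(\<And>i. i \<in> I \<Longrightarrow> algebraic (f i :: complex)) \<Longrightarrow> algebraic (sum f I)"
  by (induct I rule: infinite_finite_induct) (auto intro: alg_add)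


definition inc :: "nat \<Rightarrow> nat list \<Rightarrow> nat list" where
  "inc j k = k[j := k ! j + 1]"

lemma length_inc [simp]: "length (inc j k) = length k"
  by (simp add: inc_def)

lemma sum_inc: "j < length k \<Longrightarrow> sum_list (inc j k) = Suc (sum_list k)"
  by (simp add: inc_def sum_list_update)

lemma inc_comm: "inc a (inc b k) = inc b (inc a k)"
  by (cases "a = b") (auto simp: inc_def list_update_swap nth_list_update)

fun P :: "nat \<Rightarrow> (nat \<Rightarrow> nat \<Rightarrow> complex) \<Rightarrow> (nat list \<Rightarrow> complex) \<Rightarrow> nat list \<Rightarrow> complex" where
  "P m C v [] = v (replicate m 0)"
| "P m C v (k # w) = (\<Sum>a<m. C a k * P m C (\<lambda>x. v (inc a x)) w)"

lemma P_local:
  assumes "\<forall>x. length x = m \<and> sum_list x = length w \<longrightarrow> v x = v' x"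
  shows "P m C v w = P m C v' w"
  using assms
proof (induct w arbitrary: v v')
  case Nil then show ?case by simp
next
  case (Cons k w)
  have "P m C (\<lambda>x. v (inc a x)) w = P m C (\<lambda>x. v' (inc a x)) w" if "a < m" for a
    by (rule Cons.hyps) (use Cons.prems that in \<open>auto simp: sum_inc\<close>)
  then show ?case by simp
qed

lemma P_swap: "P m C v (k # l # w) = P m C v (l # k # w)"
proof -
  have "P m C v (k # l # w) = (\<Sum>a<m. \<Sum>b<m. C a k * C b l * P m C (\<lambda>x. v (inc a (inc b x))) w)"
    by (simp add: sum_distrib_left mult.assoc)
  also have "\<dots> = (\<Sum>b<m. \<Sum>a<m. C b l * C a k * P m C (\<lambda>x. v (inc b (inc a x))) w)"
    by (subst sum.swap) (simp add: inc_comm mult.commute)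
  also have "\<dots> = P m C v (l # k # w)"
    by (simp add: sum_distrib_left mult.assoc)
  finally show ?thesis .
qed

lemma P_front: "P m C v (xs @ k # ys) = P m C v (k # xs @ ys)"
proof (induct xs arbitrary: v)
  case Nil then show ?case by simp
next
  case (Cons x xs)
  have "P m C v ((x # xs) @ k # ys) = P m C v (x # k # xs @ ys)"
    by (simp add: Cons)
  also have "\<dots> = P m C v (k # x # xs @ ys)" by (rule P_swap)
  finally show ?case by simp
qed

lemma P_perm: "mset w = mset w' \<Longrightarrow> P m C v w = P m C v w'"
proof (induct w arbitrary: v w')
  case Nil then show ?case by simp
next
  case (Cons k w)
  then have "k \<in> set w'" by (metis list.set_intros(1) set_mset_mset)
  then obtain xs ys where w': "w' = xs @ k # ys" by (meson split_list)
  have ms: "mset w = mset (xs @ ys)" using Cons.prems w' by simp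
  have "P m C v w' = P m C v (k # xs @ ys)" by (simp add: w' P_front)
  also have "\<dots> = P m C v (k # w)" using Cons.hyps[OF ms] by simp
  finally show ?case by simp
qed

lemma P_sum: "P m C (\<lambda>x. \<Sum>b\<in>S. g b * f b x) w = (\<Sum>b\<in>S. g b * P m C (f b) w)"
proof (induct w arbitrary: f)
  case Nil then show ?case by simp
next
  case (Cons k w)
  show ?case
    by (simp add: Cons[of "\<lambda>b x. f b (inc _ x)"] sum_distrib_left mult.left_commute)
       (rule sum.swap)
qed

lemma P_add: "P m C (\<lambda>x. v x + u x) w = P m C v w + P m C u w"
  by (induct w arbitrary: v u) (simp_all add: distrib_left sum.distrib)

lemma P_scale: "P m C (\<lambda>x. c * v x) w = c * P m C v w"
  by (induct w arbitrary: v) (simp_all add: sum_distrib_left mult.left_commute)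

lemma P_diff: "P m C (\<lambda>x. v x - u x) w = P m C v w - P m C u w"
  by (induct w arbitrary: v u) (simp_all add: right_diff_distrib sum_subtractf)

lemma P_zero: "P m C (\<lambda>x. 0) w = 0"
  by (induct w) simp_all

lemma P_alg:
  assumes "\<forall>a<m. \<forall>k<m. algebraic (C a k)" "set w \<subseteq> {..<m}" "\<forall>x. algebraic (v x)"
  shows "algebraic (P m C v w)"
  using assms(2,3)
proof (induct w arbitrary: v)
  case Nil then show ?case by simp
next
  case (Cons k w)
  show ?case using Cons assms(1) by (auto intro!: alg_sum alg_mult)
qed


fun wd :: "nat \<Rightarrow> nat list \<Rightarrow> nat list" where
  "wd i [] = []"
| "wd i (c # k) = replicate c i @ wd (Suc i) k"

definition word :: "nat list \<Rightarrow> nat list" where "word k = wd 0 k"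

lemma count_wd: "count (mset (wd i k)) j = (if i \<le> j \<and> j < i + length k then k ! (j - i) else 0)"
proof (induct k arbitrary: i j)
  case Nil then show ?case by simp
next
  case (Cons c k)
  show ?case
  proof (cases "j = i")
    case True
    have "count (mset (wd (Suc i) k)) i = 0" using Cons[of "Suc i" i] by simp
    then show ?thesis using True by simp
  next
    case False
    have c0: "count (mset (replicate c i)) j = 0" using False by simp
    show ?thesis
    proof (cases "j < i")
      case True then show ?thesis using Cons[of "Suc i" j] by simp
    next
      case False
      with \<open>j \<noteq> i\<close> have ji: "i < j" by simp
      then have e: "j - i = Suc (j - Suc i)" by simp
      show ?thesis using Cons[of "Suc i" j] ji c0 by (simp add: e)
    qed
  qed
qed

lemma length_wd: "length (wd i k) = sum_list k"
  by (induct k arbitrary: i) auto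

lemma set_wd: "set (wd i k) \<subseteq> {i..<i + length k}"
  by (induct k arbitrary: i) fastforce+

lemma count_word: "count (mset (word k)) j = (if j < length k then k ! j else 0)"
  by (simp add: word_def count_wd)

lemma length_word: "length (word k) = sum_list k"
  by (simp add: word_def length_wd)

lemma set_word: "set (word k) \<subseteq> {..<length k}"
  using set_wd[of 0 k] by (auto simp: word_def)

definition cnt :: "nat \<Rightarrow> nat list \<Rightarrow> nat list" where
  "cnt m w = map (\<lambda>j. count (mset w) j) [0..<m]"

lemma cnt_word: "length k = m \<Longrightarrow> cnt m (word k) = k"
  by (auto simp: cnt_def count_word intro: nth_equalityI)

lemma word_inc: "a < length k \<Longrightarrow> mset (word (inc a k)) = mset (a # word k)"
  by (auto simp: multiset_eq_iff count_word inc_def nth_list_update)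

lemma cnt_Nil: "cnt m [] = replicate m 0"
  by (auto simp: cnt_def intro: nth_equalityI)

lemma cnt_Cons: "k < m \<Longrightarrow> cnt m (k # w) = inc k (cnt m w)"
  by (auto simp: cnt_def inc_def nth_list_update intro: nth_equalityI)

lemma P_id:
  assumes M: "\<forall>a<m. \<forall>k<m. M a k = (if a = k then 1 else 0)"
  shows "set w \<subseteq> {..<m} \<Longrightarrow> P m M v w = v (cnt m w)"
proof (induct w arbitrary: v)
  case Nil then show ?case by (simp add: cnt_Nil)
next
  case (Cons k w)
  then have k: "k < m" and w: "set w \<subseteq> {..<m}" by auto
  have "P m M v (k # w) = (\<Sum>a<m. (if a = k then P m M (\<lambda>x. v (inc a x)) w else 0))"
    unfolding P.simps by (rule sum.cong) (use M k in auto)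
  also have "\<dots> = P m M (\<lambda>x. v (inc k x)) w" using k by simp
  also have "\<dots> = v (cnt m (k # w))" using Cons.hyps[OF w] k by (simp add: cnt_Cons)
  finally show ?case .
qed

definition pv :: "nat \<Rightarrow> (nat \<Rightarrow> nat \<Rightarrow> complex) \<Rightarrow> (nat list \<Rightarrow> complex) \<Rightarrow> nat list \<Rightarrow> complex" where
  "pv m C v k = P m C v (word k)"

lemma pv_inc:
  assumes "a < length k"
  shows "pv m C v (inc a k) = (\<Sum>b<m. C b a * pv m C (\<lambda>x. v (inc b x)) k)"
proof -
  have "pv m C v (inc a k) = P m C v (a # word k)"
    unfolding pv_def by (rule P_perm) (use word_inc[OF assms] in simp)
  then show ?thesis by (simp add: pv_def)
qed

lemma P_comp:
  "set w \<subseteq> {..<m} \<Longrightarrow> P m A (pv m C v) w = P m (\<lambda>b k. \<Sum>a<m. C b a * A a k) v w"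
proof (induct w arbitrary: v)
  case Nil
  have z: "wd i (replicate n 0) = []" for i n by (induct n arbitrary: i) auto
  have "pv m C v (replicate m 0) = v (replicate m 0)"
    by (simp add: pv_def word_def z)
  then show ?case by simp
next
  case (Cons k w)
  then have w: "set w \<subseteq> {..<m}" by auto
  have eq: "P m A (\<lambda>x. pv m C v (inc a x)) w
          = (\<Sum>b<m. C b a * P m (\<lambda>b k. \<Sum>a<m. C b a * A a k) (\<lambda>x. v (inc b x)) w)"
    if a: "a < m" for a
  proof -
    have "P m A (\<lambda>x. pv m C v (inc a x)) w
        = P m A (\<lambda>x. \<Sum>b\<in>{..<m}. C b a * pv m C (\<lambda>x. v (inc b x)) x) w"
      by (rule P_local) (use a in \<open>auto simp: pv_inc\<close>)
    also have "\<dots> = (\<Sum>b<m. C b a * P m A (pv m C (\<lambda>x. v (inc b x))) w)"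
      by (rule P_sum)
    also have "\<dots> = (\<Sum>b<m. C b a * P m (\<lambda>b k. \<Sum>a<m. C b a * A a k) (\<lambda>x. v (inc b x)) w)"
      using Cons.hyps[OF w] by simp
    finally show ?thesis .
  qed
  have "P m A (pv m C v) (k # w)
     = (\<Sum>a<m. A a k * (\<Sum>b<m. C b a * P m (\<lambda>b k. \<Sum>a<m. C b a * A a k) (\<lambda>x. v (inc b x)) w))"
    by (simp add: eq)
  also have "\<dots> = (\<Sum>b<m. (\<Sum>a<m. C b a * A a k) * P m (\<lambda>b k. \<Sum>a<m. C b a * A a k) (\<lambda>x. v (inc b x)) w)"
    by (simp add: sum_distrib_left sum_distrib_right mult_ac) (rule sum.swap)
  finally show ?case by simp
qed


interpretation V: vector_space cscale
  by unfold_locales (auto simp: cscale_def algebra_simps fun_eq_iff)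

lemma sum_fun: "(\<Sum>k\<in>S. f k) x = (\<Sum>k\<in>S. f k x)"
  by (induct S rule: infinite_finite_induct) auto

lemma CO_subspace: "V.subspace (CO m N)"
  by (auto simp: V.subspace_def CO_def cscale_def)

lemma Omega_iff: "k \<in> Omega m N \<longleftrightarrow> length k = m \<and> N - 1 \<le> sum_list k \<and> sum_list k \<le> N"
  by (simp add: Omega_def)

lemma Theta_iff: "k \<in> Theta m N \<longleftrightarrow> length k = m \<and> sum_list k = N"
  by (simp add: Theta_def)

lemma finite_Theta: "finite (Theta m N)"
proof (rule finite_subset)
  show "Theta m N \<subseteq> {xs. set xs \<subseteq> {..N} \<and> length xs = m}"
    by (auto simp: Theta_def dest: member_le_sum_list)
  show "finite {xs. set xs \<subseteq> {..N} \<and> length xs = m}"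
    by (rule finite_lists_length_eq) simp
qed

definition psi :: "nat \<Rightarrow> nat \<Rightarrow> (nat \<Rightarrow> nat \<Rightarrow> complex) \<Rightarrow> (nat list \<Rightarrow> complex) \<Rightarrow> nat list \<Rightarrow> complex" where
  "psi m N C v = (\<lambda>k. if k \<in> Omega m N then pv m C v k else 0)"

lemma psi_CO: "psi m N C v \<in> CO m N"
  by (simp add: psi_def CO_def)

lemma psi_hom: "module_hom cscale cscale (psi m N C)"
proof -
  have a: "psi m N C (x + y) = psi m N C x + psi m N C y" for x y
  proof -
    have "x + y = (\<lambda>k. x k + y k)" by auto
    then show ?thesis by (auto simp: psi_def pv_def P_add)
  qed
  have s: "psi m N C (cscale c x) = cscale c (psi m N C x)" for c x
    by (auto simp: psi_def pv_def cscale_def P_scale)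
  show ?thesis unfolding module_hom_iff using a s V.module_axioms by blast
qed

lemma word_Omega: "k \<in> Omega m N \<Longrightarrow> set (word k) \<subseteq> {..<m} \<and> length (word k) = sum_list k"
  using set_word[of k] by (auto simp: Omega_def length_word)

lemma psi_inv:
  assumes AB: "\<forall>i<m. \<forall>j<m. (\<Sum>k<m. A i k * B k j) = (if i = j then 1 else 0)"
    and v: "v \<in> CO m N"
  shows "psi m N B (psi m N A v) = v"
proof
  fix k
  show "psi m N B (psi m N A v) k = v k"
  proof (cases "k \<in> Omega m N")
    case False then show ?thesis using v by (simp add: psi_def CO_def)
  next
    case True
    note w = word_Omega[OF True]
    have "psi m N B (psi m N A v) k = P m B (psi m N A v) (word k)"
      using True by (simp add: psi_def pv_def)
    also have "\<dots> = P m B (pv m A v) (word k)"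
      by (rule P_local) (use True w in \<open>auto simp: psi_def Omega_def\<close>)
    also have "\<dots> = P m (\<lambda>b c. \<Sum>a<m. A b a * B a c) v (word k)"
      by (rule P_comp) (use w in auto)
    also have "\<dots> = v (cnt m (word k))"
      by (rule P_id) (use AB w in auto)
    also have "\<dots> = v k" using True by (simp add: cnt_word Omega_def)
    finally show ?thesis .
  qed
qed

lemma psi_alg:
  assumes "\<forall>a<m. \<forall>k<m. algebraic (C a k)" "\<forall>x. algebraic (v x)"
  shows "algebraic (psi m N C v x)"
  using assms word_Omega[of x m N] by (auto simp: psi_def pv_def intro!: P_alg)


definition Fchar :: "nat \<Rightarrow> nat \<Rightarrow> (nat \<Rightarrow> complex) \<Rightarrow> (nat list \<Rightarrow> complex) set" where
  "Fchar m N z = {v \<in> CO m N. \<forall>u. length u = m \<and> sum_list u = N - 1 \<longrightarrow>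
       v u = (\<Sum>j<m. z j * v (inc j u))}"

lemma dec_inc:
  assumes "length u = length k" "j < length k"
  shows "inc j u = k \<longleftrightarrow> 0 < k ! j \<and> k[j := k ! j - 1] = u"
proof
  assume "inc j u = k"
  then show "0 < k ! j \<and> k[j := k ! j - 1] = u"
    using assms by (auto simp: inc_def)
next
  assume "0 < k ! j \<and> k[j := k ! j - 1] = u"
  then show "inc j u = k" using assms by (auto simp: inc_def)
qed

lemma sum_dec:
  fixes k :: "nat list"
  assumes "j < length k" "0 < k ! j"
  shows "sum_list (k[j := k ! j - 1]) = sum_list k - 1"
proof -
  have "k ! j \<le> sum_list k" using assms(1)
    by (induct k arbitrary: j) (auto simp: nth_Cons split: nat.splits, meson le_add2 order_trans)
  then show ?thesis using assms by (simp add: sum_list_update)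
qed

lemma Fchar_subspace: "V.subspace (Fchar m N z)"
  unfolding V.subspace_def Fchar_def CO_def
  by (auto simp: cscale_def sum.distrib sum_distrib_left algebra_simps)

lemma Zvec_Fchar:
  assumes N: "N \<ge> 1" and k: "k \<in> Theta m N"
  shows "Zvec m z k \<in> Fchar m N z"
proof -
  have lk: "length k = m" and sk: "sum_list k = N" using k by (auto simp: Theta_def)
  have dec_Om: "k[j := k ! j - 1] \<in> Omega m N \<and> sum_list (k[j := k ! j - 1]) = N - 1"
    if "j < m" "0 < k ! j" for j
    using sum_dec[of j k] that lk sk by (auto simp: Omega_def)
  have CO: "Zvec m z k \<in> CO m N"
    unfolding CO_def
  proof (intro CollectI allI impI)
    fix x assume x: "x \<notin> Omega m N"
    have "x \<noteq> k" using x k N by (auto simp: Omega_def Theta_def)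
    moreover have "(if 0 < k ! j then z j * Evec (k[j := k ! j - 1]) x else 0) = 0" if "j < m" for j
      using dec_Om[OF that] x by (auto simp: Evec_def)
    ultimately show "Zvec m z k x = 0" by (simp add: Zvec_def Evec_def)
  qed
  have cond: "Zvec m z k u = (\<Sum>j<m. z j * Zvec m z k (inc j u))"
    if u: "length u = m" "sum_list u = N - 1" for u
  proof -
    have uk: "u \<noteq> k" using u sk N by auto
    have lhs: "Zvec m z k u = (\<Sum>j<m. if inc j u = k then z j else 0)"
      unfolding Zvec_def Evec_def using uk
      by (simp only: if_False uk add_0, intro sum.cong refl) (auto simp: dec_inc lk u)
    have "Zvec m z k (inc j u) = (if inc j u = k then 1 else 0)" if j: "j < m" for j
    proof -
      have si: "sum_list (inc j u) = N" using sum_inc[of j u] j u N by simp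
      have "(if 0 < k ! i then z i * Evec (k[i := k ! i - 1]) (inc j u) else 0) = 0" if "i < m" for i
        using dec_Om[OF that] si N by (auto simp: Evec_def)
      then show ?thesis by (simp add: Zvec_def Evec_def)
    qed
    then have rhs: "(\<Sum>j<m. z j * Zvec m z k (inc j u)) = (\<Sum>j<m. if inc j u = k then z j else 0)"
      by (intro sum.cong) auto
    show ?thesis using lhs rhs by simp
  qed
  show ?thesis using CO cond by (auto simp: Fchar_def)
qed

lemma Fsp_eq:
  assumes N: "N \<ge> 1"
  shows "Fsp m N z = Fchar m N z"
proof
  show "Fsp m N z \<subseteq> Fchar m N z"
    unfolding Fsp_def using Zvec_Fchar[OF N]
    by (intro V.span_minimal Fchar_subspace) auto
next
  show "Fchar m N z \<subseteq> Fsp m N z"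
  proof
    fix v assume v: "v \<in> Fchar m N z"
    have vCO: "v \<in> CO m N" using v by (simp add: Fchar_def)
    have part2: "(\<Sum>k\<in>Theta m N. if 0 < k ! j \<and> k[j := k ! j - 1] = x then v k else 0)
        = (if length x = m \<and> sum_list x = N - 1 then v (inc j x) else 0)"
      if j: "j < m" for j x
    proof (cases "length x = m \<and> sum_list x = N - 1")
      case True
      have "inc j x \<in> Theta m N" using True j N sum_inc[of j x] by (auto simp: Theta_def)
      moreover have "(\<Sum>k\<in>Theta m N. if 0 < k ! j \<and> k[j := k ! j - 1] = x then v k else 0)
          = (\<Sum>k\<in>Theta m N. if inc j x = k then v k else 0)"
        using True j by (intro sum.cong refl) (auto simp: Theta_def dec_inc)
      ultimately show ?thesis using True finite_Theta by simp
    next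
      case False
      have "(if 0 < k ! j \<and> k[j := k ! j - 1] = x then v k else 0) = 0" if "k \<in> Theta m N" for k
        using False that sum_dec[of j k] j by (auto simp: Theta_def)
      then have s0: "(\<Sum>k\<in>Theta m N. if 0 < k ! j \<and> k[j := k ! j - 1] = x then v k else 0) = 0"
        by (intro sum.neutral) blast
      show ?thesis by (simp only: s0 if_not_P[OF False])
    qed
    have eq: "v = (\<Sum>k\<in>Theta m N. cscale (v k) (Zvec m z k))"
    proof
      fix x
      have "(\<Sum>k\<in>Theta m N. cscale (v k) (Zvec m z k)) x
          = (\<Sum>k\<in>Theta m N. v k * Evec k x)
            + (\<Sum>k\<in>Theta m N. \<Sum>j<m. if 0 < k ! j then z j * (v k * Evec (k[j := k ! j - 1]) x) else 0)"
        by (simp add: sum_fun cscale_def Zvec_def distrib_left sum.distrib sum_distrib_left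
            if_distrib mult.left_commute cong: if_cong)
      also have "(\<Sum>k\<in>Theta m N. v k * Evec k x) = (if x \<in> Theta m N then v x else 0)"
        using finite_Theta by (simp add: Evec_def if_distrib cong: if_cong) 
      also have "(\<Sum>k\<in>Theta m N. \<Sum>j<m. if 0 < k ! j then z j * (v k * Evec (k[j := k ! j - 1]) x) else 0)
          = (\<Sum>j<m. z j * (\<Sum>k\<in>Theta m N. if 0 < k ! j \<and> k[j := k ! j - 1] = x then v k else 0))"
        by (subst sum.swap) (auto simp: sum_distrib_left Evec_def intro!: sum.cong)
      also have "\<dots> = (\<Sum>j<m. z j * (if length x = m \<and> sum_list x = N - 1 then v (inc j x) else 0))"
        using part2 by simp
      finally have e: "(\<Sum>k\<in>Theta m N. cscale (v k) (Zvec m z k)) x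
          = (if x \<in> Theta m N then v x else 0)
            + (\<Sum>j<m. z j * (if length x = m \<and> sum_list x = N - 1 then v (inc j x) else 0))" .
      show "v x = (\<Sum>k\<in>Theta m N. cscale (v k) (Zvec m z k)) x"
      proof (cases "x \<in> Theta m N")
        case True
        have nc: "\<not> (length x = m \<and> sum_list x = N - 1)" using True N by (auto simp: Theta_def)
        show ?thesis by (simp only: e if_not_P[OF nc] if_P[OF True] mult_zero_right sum.neutral_const add_0_right)
      next
        case False
        show ?thesis
        proof (cases "length x = m \<and> sum_list x = N - 1")
          case True
          then show ?thesis using False v by (simp add: e Fchar_def)
        next
          case F2: False
          have "x \<notin> Omega m N" using False F2 by (auto simp: Omega_def Theta_def)
          then have "v x = 0" using vCO by (simp add: CO_def)
          then show ?thesis by (simp only: e if_not_P[OF F2] if_not_P[OF False] mult_zero_right sum.neutral_const add_0_right)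
        qed
      qed
    qed
    show "v \<in> Fsp m N z"
      unfolding Fsp_def
      by (subst eq, intro V.span_sum V.span_scale V.span_base) auto
  qed
qed


lemma transfer:
  assumes N: "N \<ge> 1"
    and xi': "\<forall>i<m. \<xi>' i = (\<Sum>j<m. A i j * \<xi> j)"
    and AB: "\<forall>i<m. \<forall>j<m. (\<Sum>k<m. A i k * B k j) = (if i = j then 1 else 0)"
    and v: "v \<in> CO m N"
  shows "psi m N A v \<in> Fchar m N \<xi> \<longleftrightarrow> v \<in> Fchar m N \<xi>'"
proof -
  define d where "d = (\<lambda>x. v x - (\<Sum>a<m. \<xi>' a * v (inc a x)))"
  have lvO: "u \<in> Omega m N" if "length u = m" "sum_list u = N - 1" for u
    using that by (simp add: Omega_def)
  have lvO': "inc j u \<in> Omega m N" if "length u = m" "sum_list u = N - 1" "j < m" for u j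
    using that N sum_inc[of j u] by (simp add: Omega_def)
  have key: "psi m N A v u - (\<Sum>j<m. \<xi> j * psi m N A v (inc j u)) = pv m A d u"
    if u: "length u = m" "sum_list u = N - 1" for u
  proof -
    have "(\<Sum>j<m. \<xi> j * psi m N A v (inc j u))
        = (\<Sum>j<m. \<xi> j * (\<Sum>b<m. A b j * pv m A (\<lambda>x. v (inc b x)) u))"
      using lvO'[OF u] u by (intro sum.cong refl) (simp add: psi_def pv_inc)
    also have "\<dots> = (\<Sum>b<m. (\<Sum>j<m. A b j * \<xi> j) * pv m A (\<lambda>x. v (inc b x)) u)"
      by (simp add: sum_distrib_left sum_distrib_right mult_ac) (rule sum.swap)
    also have "\<dots> = (\<Sum>b<m. \<xi>' b * pv m A (\<lambda>x. v (inc b x)) u)"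
      using xi' by simp
    also have "\<dots> = pv m A (\<lambda>x. \<Sum>b\<in>{..<m}. \<xi>' b * v (inc b x)) u"
      unfolding pv_def by (rule P_sum[symmetric])
    finally have "(\<Sum>j<m. \<xi> j * psi m N A v (inc j u)) = pv m A (\<lambda>x. \<Sum>b<m. \<xi>' b * v (inc b x)) u" .
    moreover have "psi m N A v u = pv m A v u" using lvO[OF u] by (simp add: psi_def)
    ultimately show ?thesis by (simp add: d_def pv_def P_diff)
  qed
  have "psi m N A v \<in> Fchar m N \<xi> \<longleftrightarrow> (\<forall>u. length u = m \<and> sum_list u = N - 1 \<longrightarrow> pv m A d u = 0)"
    using key psi_CO[of m N A v] by (auto simp: Fchar_def)
  also have "\<dots> \<longleftrightarrow> (\<forall>u. length u = m \<and> sum_list u = N - 1 \<longrightarrow> d u = 0)"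
  proof
    assume h: "\<forall>u. length u = m \<and> sum_list u = N - 1 \<longrightarrow> pv m A d u = 0"
    show "\<forall>u. length u = m \<and> sum_list u = N - 1 \<longrightarrow> d u = 0"
    proof (intro allI impI)
      fix u assume u: "length u = m \<and> sum_list u = N - 1"
      note w = word_Omega[OF lvO[OF conjunct1[OF u] conjunct2[OF u]]]
      have "d u = d (cnt m (word u))" using u by (simp add: cnt_word)
      also have "\<dots> = P m (\<lambda>b c. \<Sum>a<m. A b a * B a c) d (word u)"
        by (rule P_id[symmetric]) (use AB w in auto)
      also have "\<dots> = P m B (pv m A d) (word u)"
        by (rule P_comp[symmetric]) (use w in auto)
      also have "\<dots> = P m B (\<lambda>x. 0) (word u)"
        by (rule P_local) (use h w u in auto)
      finally show "d u = 0" by (simp add: P_zero)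
    qed
  next
    assume h: "\<forall>u. length u = m \<and> sum_list u = N - 1 \<longrightarrow> d u = 0"
    show "\<forall>u. length u = m \<and> sum_list u = N - 1 \<longrightarrow> pv m A d u = 0"
    proof (intro allI impI)
      fix u assume u: "length u = m \<and> sum_list u = N - 1"
      note w = word_Omega[OF lvO[OF conjunct1[OF u] conjunct2[OF u]]]
      have "pv m A d u = P m A (\<lambda>x. 0) (word u)"
        unfolding pv_def by (rule P_local) (use h w u in auto)
      then show "pv m A d u = 0" by (simp add: P_zero)
    qed
  qed
  also have "\<dots> \<longleftrightarrow> v \<in> Fchar m N \<xi>'"
    using v by (auto simp: Fchar_def d_def)
  finally show ?thesis .
qed

lemma dim_inj_image:
  assumes f: "module_hom cscale cscale f" and inj: "inj_on f (CO m N)"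
    and S: "S \<subseteq> CO m N" "V.subspace S"
  shows "cdim (f ` S) = cdim S"
proof -
  obtain B where B: "B \<subseteq> S" "V.independent B" "S \<subseteq> V.span B" "card B = V.dim S"
    using V.basis_exists by blast
  have spB: "V.span B = S" using B S(2) by (metis V.span_subspace)
  have injB: "inj_on f (V.span B)" using inj S(1) spB inj_on_subset by metis
  have ind: "V.independent (f ` B)"
    by (rule module_hom.independent_injective_image[OF f B(2) injB])
  have sp: "V.span (f ` B) = f ` S"
    using module_hom.span_image[OF f, of B] spB by simp
  have "card (f ` B) = V.dim (f ` S)"
    by (rule V.basis_card_eq_dim) (use B(1) sp ind in auto)
  moreover have "card (f ` B) = card B"
    by (rule card_image) (use injB V.span_superset inj_on_subset in blast)
  ultimately show ?thesis using B(4) by (simp add: cdim_def)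
qed


theorem lemma5:
  fixes m N :: nat and \<xi> \<xi>' :: "nat \<Rightarrow> complex" and A :: "nat \<Rightarrow> nat \<Rightarrow> complex" and \<rho> :: nat
  assumes "m \<ge> 1" and "N \<ge> 1"
    and indep: "\<forall>c0 c. algebraic c0 \<and> (\<forall>j<m. algebraic (c j)) \<and> c0 + (\<Sum>j<m. c j * \<xi> j) = 0
                 \<longrightarrow> c0 = 0 \<and> (\<forall>j<m. c j = 0)"
    and A_alg: "\<forall>i<m. \<forall>j<m. algebraic (A i j)"
    and A_inv: "\<exists>B. (\<forall>i<m. \<forall>j<m. algebraic (B i j)) \<and>
                 (\<forall>i<m. \<forall>j<m. (\<Sum>k<m. A i k * B k j) = (if i = j then 1 else 0)) \<and>
                 (\<forall>i<m. \<forall>j<m. (\<Sum>k<m. B i k * A k j) = (if i = j then 1 else 0))"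
    and \<xi>'_def: "\<forall>i<m. \<xi>' i = (\<Sum>j<m. A i j * \<xi> j)"
    and hyp: "\<forall>R. is_subspace m N R \<and> defined_over_Qbar R \<and> cdim R = \<rho> \<longrightarrow> propP m N \<xi> R"
  shows "\<forall>R'. is_subspace m N R' \<and> defined_over_Qbar R' \<and> cdim R' = \<rho> \<longrightarrow> propP m N \<xi>' R'"
proof (intro allI impI)
  fix R' assume R': "is_subspace m N R' \<and> defined_over_Qbar R' \<and> cdim R' = \<rho>"
  obtain B where AB: "\<forall>i<m. \<forall>j<m. (\<Sum>k<m. A i k * B k j) = (if i = j then 1 else 0)"
    and BA: "\<forall>i<m. \<forall>j<m. (\<Sum>k<m. B i k * A k j) = (if i = j then 1 else 0)"
    using A_inv by blast
  define f where "f = psi m N A"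
  define g where "g = psi m N B"
  have hom: "module_hom cscale cscale f" unfolding f_def by (rule psi_hom)
  have gf: "g (f v) = v" if "v \<in> CO m N" for v
    unfolding f_def g_def by (rule psi_inv[OF AB that])
  have fg: "f (g v) = v" if "v \<in> CO m N" for v
    unfolding f_def g_def by (rule psi_inv[OF BA that])
  have fCO: "f v \<in> CO m N" for v unfolding f_def by (rule psi_CO)
  have inj: "inj_on f (CO m N)" by (metis gf inj_onI)
  have R'CO: "R' \<subseteq> CO m N" and R'sub: "V.subspace R'"
    using R' by (auto simp: is_subspace_def)
  define R where "R = f ` R'"
  have Rsub: "is_subspace m N R"
    unfolding is_subspace_def R_def
    using fCO module_hom.subspace_image[OF hom R'sub] by auto
  have Rq: "defined_over_Qbar R"
  proof -
    obtain Bs where Bs: "Bs \<subseteq> R'" "V.independent Bs" "V.span Bs = R'" "\<forall>b\<in>Bs. \<forall>x. algebraic (b x)"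
      using R' by (auto simp: defined_over_Qbar_def)
    have injB: "inj_on f (V.span Bs)" using inj R'CO Bs(3) inj_on_subset by metis
    show ?thesis unfolding defined_over_Qbar_def
    proof (intro exI conjI)
      show "f ` Bs \<subseteq> R" using Bs(1) by (auto simp: R_def)
      show "V.independent (f ` Bs)"
        by (rule module_hom.independent_injective_image[OF hom Bs(2) injB])
      show "V.span (f ` Bs) = R"
        using module_hom.span_image[OF hom, of Bs] Bs(3) by (simp add: R_def)
      show "\<forall>b\<in>f ` Bs. \<forall>x. algebraic (b x)"
        using Bs(4) A_alg by (auto simp: f_def intro!: psi_alg)
    qed
  qed
  have dimR: "cdim R = cdim R'"
    unfolding R_def by (rule dim_inj_image[OF hom inj R'CO R'sub])
  have PR: "propP m N \<xi> R" using hyp Rsub Rq dimR R' by auto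
  have FR: "Fsp m N \<xi> \<inter> R = f ` (Fsp m N \<xi>' \<inter> R')"
  proof
    show "Fsp m N \<xi> \<inter> R \<subseteq> f ` (Fsp m N \<xi>' \<inter> R')"
    proof
      fix y assume y: "y \<in> Fsp m N \<xi> \<inter> R"
      then obtain v where v: "v \<in> R'" "y = f v" by (auto simp: R_def)
      have "v \<in> Fsp m N \<xi>'"
        using y v transfer[OF assms(2) \<xi>'_def AB, of v] R'CO
        by (auto simp: Fsp_eq[OF assms(2)] f_def)
      then show "y \<in> f ` (Fsp m N \<xi>' \<inter> R')" using v by auto
    qed
  next
    show "f ` (Fsp m N \<xi>' \<inter> R') \<subseteq> Fsp m N \<xi> \<inter> R"
    proof
      fix y assume "y \<in> f ` (Fsp m N \<xi>' \<inter> R')"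
      then obtain v where v: "v \<in> Fsp m N \<xi>'" "v \<in> R'" "y = f v" by auto
      have "y \<in> Fsp m N \<xi>"
        using v transfer[OF assms(2) \<xi>'_def AB, of v] R'CO
        by (auto simp: Fsp_eq[OF assms(2)] f_def)
      then show "y \<in> Fsp m N \<xi> \<inter> R" using v by (auto simp: R_def)
    qed
  qed
  have dimF: "cdim (Fsp m N \<xi> \<inter> R) = cdim (Fsp m N \<xi>' \<inter> R')"
    unfolding FR
  proof (rule dim_inj_image[OF hom inj])
    show "Fsp m N \<xi>' \<inter> R' \<subseteq> CO m N" using R'CO by auto
    show "V.subspace (Fsp m N \<xi>' \<inter> R')"
      by (rule V.subspace_inter) (use R'sub in \<open>auto simp: Fsp_def\<close>)
  qed
  have z: "R = {0} \<longleftrightarrow> R' = {0}"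
  proof
    assume "R = {0}"
    then have "f v = 0" if "v \<in> R'" for v using that by (auto simp: R_def)
    moreover have "0 \<in> R'" using R'sub by (simp add: V.subspace_def)
    moreover have "f 0 = 0" using module_hom.zero[OF hom] .
    ultimately show "R' = {0}"
      using inj R'CO V.subspace_def[of "CO m N"] CO_subspace[of m N]
      by (auto simp: inj_on_def)
  next
    assume "R' = {0}"
    then show "R = {0}" using module_hom.zero[OF hom] by (simp add: R_def)
  qed
  have full: "R = CO m N \<longleftrightarrow> R' = CO m N"
  proof
    assume h: "R = CO m N"
    show "R' = CO m N"
    proof
      show "CO m N \<subseteq> R'"
      proof
        fix y assume y: "y \<in> CO m N"
        then have "f y \<in> f ` R'" using h fCO by (simp add: R_def[symmetric])
        then obtain v where "v \<in> R'" "f y = f v" by auto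
        then show "y \<in> R'" using inj y R'CO by (metis inj_on_def subsetD)
      qed
    qed (rule R'CO)
  next
    assume h: "R' = CO m N"
    show "R = CO m N"
    proof
      show "R \<subseteq> CO m N" using fCO by (auto simp: R_def)
      show "CO m N \<subseteq> R"
      proof
        fix y assume y: "y \<in> CO m N"
        have "g y \<in> CO m N" unfolding g_def by (rule psi_CO)
        then show "y \<in> R" using fg[OF y] h by (auto simp: R_def intro: rev_image_eqI)
      qed
    qed
  qed
  show "propP m N \<xi>' R'"
    using PR dimR dimF z full by (simp add: propP_def)
qed

end
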